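(* Let $B=2\pi/\sqrt{6}$. For all sufficiently large integers $N$ and all integers $\ell$ with $\sqrt{N}(\log N)^2<|\ell|\le N/2$, $$V_d\left(\ell,\,N+\frac{|\ell|(|\ell|+1)}{2}\right)=p(N)\left(1+O\left(N^{-\sqrt{\log N}}\right)\right),$$ with an absolute implied constant.
   Context: A strongly concave composition of a nonnegative integer $n$ is a finite sequence of nonnegative integers $(a_1,\dots,a_s)$, $s\ge 1$, summing to $n$, such that for some index $k$ with $1\le k\le s$ one has $a_1>a_2>\dots>a_{k-1}>a_k<a_{k+1}<\dots<a_s$. Its rank is $s-2k+1$. $V_d(m,n)$ denotes the number of strongly concave compositions of $n$ with rank $m$. $p(n)$ is the partition function, with $p(n)=0$ for negative $n$. *)

theory Defs
  imports Complex_Main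
begin

text \<open>With the paper's 1-indexed position
  k' = k + 1, the rank s - 2k' + 1 equals length xs - 2k - 1. The position is unique.\<close>

definition sc_with_rank :: "nat list \<Rightarrow> int \<Rightarrow> bool" where
  "sc_with_rank xs m \<longleftrightarrow>
     (\<exists>k < length xs. sorted_wrt (>) (take (Suc k) xs) \<and> sorted_wrt (<) (drop k xs)
        \<and> m = int (length xs) - 2 * int k - 1)"

definition strongly_concave :: "nat list \<Rightarrow> bool" where
  "strongly_concave xs \<longleftrightarrow> (\<exists>m. sc_with_rank xs m)"

definition Vd :: "int \<Rightarrow> nat \<Rightarrow> nat" where
  "Vd m n = card {xs. sum_list xs = n \<and> sc_with_rank xs m}"

definition partition_count :: "nat \<Rightarrow> nat" where
  "partition_count n = card {xs. sorted_wrt (\<ge>) xs \<and> (\<forall>x\<in>set xs. 0 < x) \<and> sum_list xs = n}"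

end

theory Submission
  imports Defs "HOL-Library.Multiset" "HOL-Real_Asymp.Real_Asymp"
begin

abbreviation pc where "pc \<equiv> partition_count"

definition PM :: "nat \<Rightarrow> nat multiset set" where
  "PM n = {M. 0 \<notin># M \<and> sum_mset M = n}"

definition PL :: "nat \<Rightarrow> nat list set" where
  "PL n = {xs. sorted_wrt (\<ge>) xs \<and> (\<forall>x\<in>set xs. 0 < x) \<and> sum_list xs = n}"

lemma sum_list_ge_length: "(\<forall>x\<in>set xs. 0 < (x::nat)) \<Longrightarrow> length xs \<le> sum_list xs"
  by (induction xs) auto

lemma PL_finite: "finite (PL n)"
proof -
  have "PL n \<subseteq> {xs. set xs \<subseteq> {0..n} \<and> length xs \<le> n}"
    unfolding PL_def using sum_list_ge_length member_le_sum_list by fastforce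
  moreover have "finite {xs. set xs \<subseteq> {0..n} \<and> length xs \<le> n}"
    by (rule finite_lists_length_le) auto
  ultimately show ?thesis by (rule finite_subset)
qed

lemma bij_PL_PM: "bij_betw mset (PL n) (PM n)"
proof (rule bij_betw_imageI)
  show "inj_on mset (PL n)"
  proof
    fix xs ys assume "xs \<in> PL n" "ys \<in> PL n" "mset xs = mset ys"
    then have "sorted (rev xs)" "sorted (rev ys)" "mset (rev xs) = mset (rev ys)"
      unfolding PL_def by (auto simp: sorted_wrt_rev)
    then have "rev xs = rev ys"
      by (metis properties_for_sort)
    then show "xs = ys" by simp
  qed
  show "mset ` PL n = PM n"
  proof
    show "mset ` PL n \<subseteq> PM n" unfolding PL_def PM_def by (auto simp: sum_mset_sum_list)
    show "PM n \<subseteq> mset ` PL n"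
    proof
      fix M assume M: "M \<in> PM n"
      let ?xs = "rev (sorted_list_of_multiset M)"
      have "?xs \<in> PL n" using M unfolding PL_def PM_def
        by (auto simp: sorted_wrt_rev sum_mset_sum_list[symmetric] intro!: gr0I)
      moreover have "mset ?xs = M" by simp
      ultimately show "M \<in> mset ` PL n" by (metis image_eqI)
    qed
  qed
qed

lemma pc_PM: "pc n = card (PM n)"
proof -
  have "pc n = card (PL n)" unfolding partition_count_def PL_def by simp
  also have "\<dots> = card (PM n)" using bij_PL_PM by (rule bij_betw_same_card)
  finally show ?thesis .
qed

lemma PM_finite: "finite (PM n)"
  using bij_PL_PM PL_finite bij_betw_finite by blast

lemma pc_Suc: "pc m \<le> pc (Suc m)"
proof -
  have "card (PM m) \<le> card (PM (Suc m))"
  proof (rule card_inj_on_le[where f="\<lambda>M. M + {#1#}"])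
    show "inj_on (\<lambda>M. M + {#1#}) (PM m)" by (auto simp: inj_on_def)
    show "(\<lambda>M. M + {#1#}) ` PM m \<subseteq> PM (Suc m)" by (auto simp: PM_def)
  qed (rule PM_finite)
  then show ?thesis by (simp add: pc_PM)
qed

lemma pc_mono: "m \<le> m' \<Longrightarrow> pc m \<le> pc m'"
  using pc_Suc by (rule lift_Suc_mono_le)

lemma card_ge_sum_set:
  "finite S \<Longrightarrow> 0 \<notin> S \<Longrightarrow> card S * (card S + 1) \<le> 2 * sum id (S::nat set)"
proof (induction "card S" arbitrary: S)
  case 0 then show ?case by simp
next
  case (Suc d)
  then have ne: "S \<noteq> {}" by auto
  let ?m = "Max S"
  have mS: "?m \<in> S" using Suc ne by simp
  have "S \<subseteq> {1..?m}" using Suc.prems by (auto simp: Suc_le_eq intro: gr0I)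
  then have "card S \<le> ?m" using card_mono[of "{1..?m}" S] by simp
  have "card (S - {?m}) = d" using Suc mS by simp
  then have IH: "d * (d+1) \<le> 2 * sum id (S - {?m})" using Suc.hyps(1)[of "S - {?m}"] Suc.prems by simp
  have "sum id S = ?m + sum id (S - {?m})" using Suc mS by (simp add: sum.remove)
  moreover have "card S = Suc d" using Suc.hyps(2) by simp
  ultimately show ?case using IH \<open>card S \<le> ?m\<close> by (simp add: algebra_simps)
qed

lemma sum_mset_set_le: "sum id (set_mset M) \<le> sum_mset (M :: nat multiset)"
proof -
  have "sum_mset (mset_set (set_mset M)) \<le> sum_mset M"
    using mset_set_set_mset_msubset by (metis subset_mset.add_diff_inverse sum_mset.union le_add1)
  moreover have "sum_mset (mset_set (set_mset M)) = sum id (set_mset M)"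
    by (simp add: sum_unfold_sum_mset)
  ultimately show ?thesis by simp
qed

lemma distinct_parts_bound:
  assumes "M \<in> PM m"
  shows "card (set_mset M) * (card (set_mset M) + 1) \<le> 2 * m"
  using card_ge_sum_set[of "set_mset M"] sum_mset_set_le[of M] assms unfolding PM_def by auto


lemma mset_decomp:
  "(M::nat multiset) = filter_mset (\<lambda>x. 0<x) M + replicate_mset (size M - size (filter_mset (\<lambda>x. 0<x) M)) 0"
proof -
  have 1: "M = filter_mset (\<lambda>x. 0<x) M + filter_mset (\<lambda>x. \<not> 0<x) M"
    by (rule multiset_partition)
  have 2: "filter_mset (\<lambda>x. \<not> 0<x) M = replicate_mset (count M 0) 0"
  proof -
    have "(\<lambda>x. \<not> 0 < (x::nat)) = (\<lambda>x. x = 0)" by auto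
    then show ?thesis by (simp only: filter_eq_replicate_mset)
  qed
  have "size M = size (filter_mset (\<lambda>x. 0<x) M + filter_mset (\<lambda>x. \<not> 0<x) M)"
    using 1 by (rule arg_cong)
  then have "size M = size (filter_mset (\<lambda>x. 0<x) M) + count M 0"
    by (simp only: size_union 2 size_replicate_mset)
  then have 3: "count M 0 = size M - size (filter_mset (\<lambda>x. 0<x) M)" by simp
  have 4: "M = filter_mset (\<lambda>x. 0<x) M + replicate_mset (count M 0) 0"
    by (subst 2[symmetric]) (rule 1)
  show ?thesis unfolding 3[symmetric] by (rule 4)
qed

lemma elem_le_sum_mset: "x \<in># M \<Longrightarrow> x \<le> sum_mset (M::nat multiset)"
  by (simp add: sum_mset.remove)

lemma finite_Z: "finite {M::nat multiset. size M = r \<and> sum_mset M = s}"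
proof -
  have "{M::nat multiset. size M = r \<and> sum_mset M = s} \<subseteq> mset ` {xs. set xs \<subseteq> {0..s} \<and> length xs = r}"
  proof
    fix M :: "nat multiset" assume "M \<in> {M. size M = r \<and> sum_mset M = s}"
    then have sz: "size M = r" and sm: "sum_mset M = s" by simp_all
    have "length (sorted_list_of_multiset M) = size (mset (sorted_list_of_multiset M))"
      by (rule size_mset[symmetric])
    also have "\<dots> = r" using sz by (simp only: mset_sorted_list_of_multiset)
    finally have l: "length (sorted_list_of_multiset M) = r" .
    have "set (sorted_list_of_multiset M) \<subseteq> {0..s}"
    proof
      fix x assume "x \<in> set (sorted_list_of_multiset M)"
      then have "x \<in># M" by simp
      then have "x \<le> s" using elem_le_sum_mset[of x M] sm by simp
      then show "x \<in> {0..s}" by simp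
    qed
    then have inl: "sorted_list_of_multiset M \<in> {xs. set xs \<subseteq> {0..s} \<and> length xs = r}"
      using l by simp
    show "M \<in> mset ` {xs. set xs \<subseteq> {0..s} \<and> length xs = r}"
      by (rule image_eqI[where x="sorted_list_of_multiset M", OF _ inl]) simp
  qed
  moreover have "finite {xs. set xs \<subseteq> {0..s} \<and> length xs = (r::nat)}"
    by (rule finite_lists_length_eq) auto
  ultimately show ?thesis by (rule finite_subset[OF _ finite_imageI])
qed

lemma card_Z: "card {M::nat multiset. size M = r \<and> sum_mset M = s} \<le> pc s"
proof -
  have "card {M::nat multiset. size M = r \<and> sum_mset M = s} \<le> card (PM s)"
  proof (rule card_inj_on_le[where f="filter_mset (\<lambda>x. 0<x)"])
    show "inj_on (filter_mset (\<lambda>x. 0<x)) {M::nat multiset. size M = r \<and> sum_mset M = s}"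
    proof
      fix M N :: "nat multiset"
      assume "M \<in> {M. size M = r \<and> sum_mset M = s}" "N \<in> {M. size M = r \<and> sum_mset M = s}"
        and e: "filter_mset (\<lambda>x. 0<x) M = filter_mset (\<lambda>x. 0<x) N"
      then have "size M = size N" by simp
      have "M = filter_mset (\<lambda>x. 0<x) M + replicate_mset (size M - size (filter_mset (\<lambda>x. 0<x) M)) 0"
        by (rule mset_decomp)
      also have "\<dots> = filter_mset (\<lambda>x. 0<x) N + replicate_mset (size N - size (filter_mset (\<lambda>x. 0<x) N)) 0"
        by (simp only: e \<open>size M = size N\<close>)
      also have "\<dots> = N" by (rule mset_decomp[symmetric])
      finally show "M = N" .
    qed
    show "filter_mset (\<lambda>x. 0<x) ` {M::nat multiset. size M = r \<and> sum_mset M = s} \<subseteq> PM s"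
    proof
      fix A assume "A \<in> filter_mset (\<lambda>x. 0<x) ` {M::nat multiset. size M = r \<and> sum_mset M = s}"
      then obtain M where M: "size M = r" "sum_mset M = s" "A = filter_mset (\<lambda>x. 0<x) M" by auto
      have "sum_mset M = sum_mset (filter_mset (\<lambda>x. 0<x) M + replicate_mset (size M - size (filter_mset (\<lambda>x. 0<x) M)) 0)"
        by (subst mset_decomp) simp
      also have "\<dots> = sum_mset A" by (simp add: M(3) sum_mset_replicate_mset)
      finally have "sum_mset M = sum_mset A" .
      then show "A \<in> PM s" using M by (auto simp: PM_def)
    qed
  qed (rule PM_finite)
  then show ?thesis by (simp only: pc_PM)
qed

lemma growth:
  fixes m t R Mv D :: nat
  assumes tm: "t \<le> m" and R1: "1 \<le> R" and RM: "R*Mv + 1 \<le> t"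
    and Dbd: "\<forall>\<pi>\<in>PM m. card (set_mset \<pi>) \<le> D"
  shows "pc (m - t) * (Mv choose (R-1)) \<le> pc m * (D choose R)"
proof -
  define SS where "SS = {S. S \<subseteq> {1..t} \<and> card S = R \<and> sum id S = t}"
  define TT where "TT = {T. T \<subseteq> {1..Mv} \<and> card T = R - 1}"
  have fin_SS: "finite SS"
  proof -
    have "SS \<subseteq> Pow {1..t}" unfolding SS_def by auto
    then show ?thesis by (rule finite_subset) simp
  qed
  have cTT: "card TT = Mv choose (R-1)" using n_subsets[of "{1..Mv}" "R-1"] by (simp add: TT_def)
  have sumT: "sum id T \<le> (R-1) * Mv" if "T \<in> TT" for T
  proof -
    have "sum id T \<le> of_nat (card T) * Mv"
      by (rule sum_bounded_above) (use that in \<open>auto simp: TT_def\<close>)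
    then show ?thesis using that by (simp add: TT_def)
  qed
  have big: "Mv < t - sum id T" if "T \<in> TT" for T
  proof -
    have "R * Mv = (R-1)*Mv + Mv" using R1 by (cases R) auto
    then show ?thesis using sumT[OF that] RM by linarith
  qed
  have "card TT \<le> card SS"
  proof (rule card_inj_on_le[where f="\<lambda>T. insert (t - sum id T) T"])
    show "inj_on (\<lambda>T. insert (t - sum id T) T) TT"
    proof
      fix T1 T2 assume T1: "T1 \<in> TT" and T2: "T2 \<in> TT"
        and e: "insert (t - sum id T1) T1 = insert (t - sum id T2) T2"
      have h1: "insert (t - sum id T1) T1 \<inter> {1..Mv} = T1" using T1 big[OF T1] by (auto simp: TT_def)
      have h2: "insert (t - sum id T2) T2 \<inter> {1..Mv} = T2" using T2 big[OF T2] by (auto simp: TT_def)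
      have "T1 = insert (t - sum id T1) T1 \<inter> {1..Mv}" using h1 by (rule sym)
      also have "\<dots> = insert (t - sum id T2) T2 \<inter> {1..Mv}" by (simp only: e)
      also have "\<dots> = T2" by (rule h2)
      finally show "T1 = T2" .
    qed
    show "(\<lambda>T. insert (t - sum id T) T) ` TT \<subseteq> SS"
    proof
      fix S assume "S \<in> (\<lambda>T. insert (t - sum id T) T) ` TT"
      then obtain T where T: "T \<in> TT" and S: "S = insert (t - sum id T) T" by auto
      have fT: "finite T" using T by (auto simp: TT_def intro: finite_subset)
      have nin: "t - sum id T \<notin> T" using T big[OF T] by (auto simp: TT_def)
      have "Mv < t" proof -
        have "Mv \<le> R*Mv" using R1 by simp
        then show ?thesis using RM by linarith
      qed
      have "sum id T \<le> t" using big[OF T] by linarith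
      have "S \<subseteq> {1..t}" using T big[OF T] \<open>Mv < t\<close> S by (auto simp: TT_def)
      moreover have "card S = R" using T fT nin S R1 by (simp add: TT_def)
      moreover have "sum id S = t" using fT nin S \<open>sum id T \<le> t\<close> by simp
      ultimately show "S \<in> SS" by (simp add: SS_def)
    qed
  qed (rule fin_SS)
  define B :: "nat multiset \<Rightarrow> nat set set" where "B = (\<lambda>\<pi>. {S. S \<subseteq> set_mset \<pi> \<and> card S = R})"
  have finB_each: "finite (B \<pi>)" for \<pi>
    unfolding B_def by (rule finite_subset[of _ "Pow (set_mset \<pi>)"]) auto
  have finB: "finite (Sigma (PM m) B)"
    by (rule finite_SigmaI[OF PM_finite finB_each])
  have "card (PM (m - t) \<times> SS) \<le> card (Sigma (PM m) B)"
  proof (rule card_inj_on_le[where f="\<lambda>(lam,S). (lam + mset_set S, S)"])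
    show "inj_on (\<lambda>(lam,S). (lam + mset_set S, S)) (PM (m - t) \<times> SS)"
      by (rule inj_onI) (clarsimp)
    show "(\<lambda>(lam,S). (lam + mset_set S, S)) ` (PM (m - t) \<times> SS) \<subseteq> Sigma (PM m) B"
    proof
      fix x assume "x \<in> (\<lambda>(lam,S). (lam + mset_set S, S)) ` (PM (m - t) \<times> SS)"
      then obtain lam S where l: "lam \<in> PM (m - t)" and S: "S \<in> SS" and x: "x = (lam + mset_set S, S)" by auto
      have fS: "finite S" using S by (auto simp: SS_def intro: finite_subset)
      have "sum_mset (mset_set S) = t" using S fS by (simp add: SS_def sum_unfold_sum_mset)
      then have "lam + mset_set S \<in> PM m" using l S fS tm by (auto simp: PM_def SS_def)
      moreover have "S \<in> B (lam + mset_set S)" using S fS by (auto simp: B_def SS_def)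
      ultimately show "x \<in> Sigma (PM m) B" using x by simp
    qed
  qed (rule finB)
  also have "\<dots> = (\<Sum>\<pi>\<in>PM m. card (B \<pi>))"
    by (rule card_SigmaI[OF PM_finite]) (simp add: finB_each)
  also have "\<dots> = (\<Sum>\<pi>\<in>PM m. card (set_mset \<pi>) choose R)"
    by (rule sum.cong) (auto simp: B_def n_subsets)
  also have "\<dots> \<le> (\<Sum>\<pi>\<in>PM m. D choose R)"
    by (rule sum_mono) (use Dbd binomial_right_mono in auto)
  also have "\<dots> = pc m * (D choose R)" by (simp add: pc_PM)
  finally have "pc (m - t) * card SS \<le> pc m * (D choose R)"
    by (simp add: card_cartesian_product pc_PM)
  moreover have "pc (m - t) * (Mv choose (R-1)) \<le> pc (m - t) * card SS"
    using \<open>card TT \<le> card SS\<close> cTT by simp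
  ultimately show ?thesis by linarith
qed


lemma choose_Suc_le: "(D choose Suc r) \<le> D * (D choose r)"
proof -
  have "Suc r * (D choose Suc r) = D * (D - 1 choose r)" by (rule binomial_absorption)
  also have "\<dots> \<le> D * (D choose r)" by (simp add: binomial_right_mono)
  finally show ?thesis
    by (metis le_trans mult_le_mono1 Suc_le_eq zero_less_Suc mult_1 One_nat_def)
qed

lemma choose_pow2: "2*D \<le> M \<Longrightarrow> 2^k * (D choose k) \<le> M choose k"
proof (induction k)
  case 0 then show ?case by simp
next
  case (Suc k)
  have a: "Suc k * (D choose Suc k) = D * (D - 1 choose k)" by (rule binomial_absorption)
  have b: "Suc k * (M choose Suc k) = M * (M - 1 choose k)" by (rule binomial_absorption)
  have a': "Suc k * (D choose Suc k) = (D - k) * (D choose k)" using a binomial_absorb_comp[of D k] by simp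
  have b': "Suc k * (M choose Suc k) = (M - k) * (M choose k)" using b binomial_absorb_comp[of M k] by simp
  have c: "2 * (D - k) \<le> M - k" using Suc.prems by linarith
  have "Suc k * (2 ^ Suc k * (D choose Suc k)) = 2 * 2^k * (Suc k * (D choose Suc k))"
    by (simp only: mult_ac power_Suc)
  also have "\<dots> = 2 * 2^k * ((D - k) * (D choose k))" by (simp only: a')
  also have "\<dots> = 2 * (D - k) * (2^k * (D choose k))" by (simp only: mult_ac)
  finally have "Suc k * (2 ^ Suc k * (D choose Suc k)) = 2 * (D - k) * (2^k * (D choose k))" .
  also have "\<dots> \<le> 2 * (D - k) * (M choose k)" using Suc by simp
  also have "\<dots> \<le> (M - k) * (M choose k)" using c by (rule mult_right_mono) simp
  also have "\<dots> = Suc k * (M choose Suc k)" using b' by simp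
  finally have "Suc k * (2 ^ Suc k * (D choose Suc k)) \<le> Suc k * (M choose Suc k)" .
  then show ?case by (simp only: mult_le_cancel1)
qed

lemma binom_ratio:
  assumes "1 \<le> R" "2*D \<le> M"
  shows "(D choose R) * 2^(R-1) \<le> D * (M choose (R-1))"
proof -
  obtain r where R: "R = Suc r" using assms(1) by (cases R) auto
  have "(D choose R) * 2^(R-1) \<le> D * (D choose r) * 2^r" using choose_Suc_le[of D r] R by simp
  also have "\<dots> = D * (2^r * (D choose r))" by simp
  also have "\<dots> \<le> D * (M choose r)" using choose_pow2[OF assms(2), of r] by simp
  finally show ?thesis using R by simp
qed

lemma step_bound:
  fixes l R Mv D N :: nat
  assumes R1: "1 \<le> R" and RM: "R*Mv + 1 \<le> l" and DM: "2*D \<le> Mv" and RMv: "R - 1 \<le> Mv"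
    and Dbd: "\<forall>m\<le>N. \<forall>\<pi>\<in>PM m. card (set_mset \<pi>) \<le> D"
  shows "\<forall>m. l \<le> m \<and> m \<le> N \<longrightarrow> real (pc (m - l)) \<le> (real D / 2^(R-1)) * real (pc m)"
proof (intro allI impI)
  fix m assume m: "l \<le> m \<and> m \<le> N"
  have g: "pc (m - l) * (Mv choose (R-1)) \<le> pc m * (D choose R)"
    by (rule growth) (use m R1 RM Dbd in auto)
  have cpos: "0 < Mv choose (R-1)" using RMv by (simp add: zero_less_binomial)
  have "pc (m - l) * (Mv choose (R-1)) * 2^(R-1) \<le> pc m * ((D choose R) * 2^(R-1))"
    using g by (simp add: mult.assoc)
  also have "\<dots> \<le> pc m * (D * (Mv choose (R-1)))" using binom_ratio[OF R1 DM] by simp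
  finally have "(pc (m - l) * 2^(R-1)) * (Mv choose (R-1)) \<le> (pc m * D) * (Mv choose (R-1))"
    by (simp add: algebra_simps)
  then have "pc (m - l) * 2^(R-1) \<le> pc m * D" using cpos by simp
  then have "real (pc (m - l)) * 2^(R-1) \<le> real (pc m) * real D"
    by (metis of_nat_le_iff of_nat_mult of_nat_numeral of_nat_power)
  then show "real (pc (m - l)) \<le> (real D / 2^(R-1)) * real (pc m)"
    by (simp add: field_simps)
qed

lemma iter_bound:
  fixes l N :: nat and \<rho> :: real
  assumes st: "\<forall>m. l \<le> m \<and> m \<le> N \<longrightarrow> real (pc (m - l)) \<le> \<rho> * real (pc m)" and rp: "0 \<le> \<rho>"
  shows "w*l \<le> N \<Longrightarrow> real (pc (N - w*l)) \<le> \<rho>^w * real (pc N)"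
proof (induction w)
  case 0 then show ?case by simp
next
  case (Suc w)
  then have "w * l \<le> N" by simp
  then have IH: "real (pc (N - w*l)) \<le> \<rho>^w * real (pc N)" using Suc.IH by simp
  have "l \<le> N - w*l" "N - w*l \<le> N" using Suc.prems by auto
  then have "real (pc (N - w*l - l)) \<le> \<rho> * real (pc (N - w*l))" using st by blast
  also have "\<dots> \<le> \<rho> * (\<rho>^w * real (pc N))" using IH rp by (rule mult_left_mono)
  finally show ?case by (simp add: algebra_simps diff_diff_add)
qed

lemma size_le_sum: "0 \<notin># M \<Longrightarrow> size M \<le> sum_mset (M::nat multiset)"
  by (induction M) (auto simp: Suc_le_eq intro: gr0I)

lemma sum_minus1: "0 \<notin># M \<Longrightarrow> sum_mset (image_mset (\<lambda>x. x - 1) M) + size M = sum_mset (M::nat multiset)"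
  by (induction M) auto

lemma many_parts: "card {M\<in>PM N. l < size M} \<le> N * pc (N - l)"
proof -
  define Z where "Z = (\<lambda>r. {M::nat multiset. size M = r \<and> sum_mset M = N - r})"
  have finZ: "finite (Sigma {l+1..N} Z)"
    by (rule finite_SigmaI) (simp_all add: Z_def finite_Z)
  have "card {M\<in>PM N. l < size M} \<le> card (Sigma {l+1..N} Z)"
  proof (rule card_inj_on_le[where f="\<lambda>M. (size M, image_mset (\<lambda>x. x - 1) M)"])
    show "inj_on (\<lambda>M. (size M, image_mset (\<lambda>x. x - 1) M)) {M\<in>PM N. l < size M}"
    proof
      fix A B assume A: "A \<in> {M\<in>PM N. l < size M}" and B: "B \<in> {M\<in>PM N. l < size M}"
        and e: "(size A, image_mset (\<lambda>x. x - 1) A) = (size B, image_mset (\<lambda>x. x - 1) B)"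
      have inv: "image_mset Suc (image_mset (\<lambda>x. x - 1) M) = M" if "0 \<notin># M" for M :: "nat multiset"
      proof -
        have "image_mset Suc (image_mset (\<lambda>x. x - 1) M) = image_mset (\<lambda>x. x) M"
          unfolding multiset.map_comp
        proof (rule image_mset_cong)
          fix x assume "x \<in># M"
          then have "x \<noteq> 0" using that by metis
          then show "(Suc \<circ> (\<lambda>x. x - 1)) x = x" by simp
        qed
        then show ?thesis by simp
      qed
      have "A = image_mset Suc (image_mset (\<lambda>x. x - 1) A)" using A inv by (simp add: PM_def)
      also have "\<dots> = image_mset Suc (image_mset (\<lambda>x. x - 1) B)" using e by simp
      also have "\<dots> = B" using B inv by (simp add: PM_def)
      finally show "A = B" .
    qed
    show "(\<lambda>M. (size M, image_mset (\<lambda>x. x - 1) M)) ` {M\<in>PM N. l < size M} \<subseteq> Sigma {l+1..N} Z"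
    proof
      fix x assume "x \<in> (\<lambda>M. (size M, image_mset (\<lambda>x. x - 1) M)) ` {M\<in>PM N. l < size M}"
      then obtain M where M: "M \<in> PM N" "l < size M" and x: "x = (size M, image_mset (\<lambda>x. x - 1) M)" by blast
      have "size M \<le> N" using size_le_sum[of M] M by (simp add: PM_def)
      moreover have "sum_mset (image_mset (\<lambda>x. x - 1) M) = N - size M"
        using sum_minus1[of M] M by (simp add: PM_def)
      ultimately show "x \<in> Sigma {l+1..N} Z" using M x by (simp add: Z_def)
    qed
  qed (rule finZ)
  also have "\<dots> = (\<Sum>r\<in>{l+1..N}. card (Z r))"
    by (rule card_SigmaI) (simp_all add: Z_def finite_Z)
  also have "\<dots> \<le> (\<Sum>r\<in>{l+1..N}. pc (N - l))"
  proof (rule sum_mono)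
    fix r assume "r \<in> {l+1..N}"
    then have "card (Z r) \<le> pc (N - r)" "pc (N - r) \<le> pc (N - l)"
      using card_Z pc_mono by (auto simp: Z_def)
    then show "card (Z r) \<le> pc (N - l)" by simp
  qed
  also have "\<dots> \<le> N * pc (N - l)" by simp
  finally show ?thesis .
qed




definition G :: "nat \<Rightarrow> nat" where "G L = (\<Sum>i<L. i + 1)"

lemma G_ge: "L \<le> G L"
  unfolding G_def by (induction L) auto

lemma G_add: "G l + k * l \<le> G (k + l)"
  unfolding G_def by (induction k) auto

lemma G_closed: "G L = L * (L + 1) div 2"
proof -
  have "2 * G L = L * (L + 1)" unfolding G_def by (induction L) auto
  then show ?thesis by simp
qed

lemma sorted_lt_gap:
  fixes zs :: "nat list"
  assumes "sorted_wrt (<) zs" "a \<le> b" "b < length zs"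
  shows "zs ! a + (b - a) \<le> zs ! b"
  using assms(2,3)
proof (induction b)
  case 0 then show ?case by simp
next
  case (Suc b)
  show ?case
  proof (cases "a = Suc b")
    case True then show ?thesis by simp
  next
    case False
    then have "a \<le> b" using Suc.prems by simp
    then have "zs ! a + (b - a) \<le> zs ! b" using Suc by simp
    moreover have "zs ! b < zs ! Suc b" using assms(1) Suc.prems by (simp add: sorted_wrt_iff_nth_less)
    ultimately show ?thesis using \<open>a \<le> b\<close> by linarith
  qed
qed

definition rebuild :: "nat list \<Rightarrow> nat list \<Rightarrow> nat list" where
  "rebuild pre ys = pre @ map (\<lambda>i. ys ! i + i + 1 + last pre) [0..<length ys]"

definition ysof :: "nat list \<Rightarrow> nat \<Rightarrow> nat list" where
  "ysof xs k = map (\<lambda>i. xs ! (Suc k + i) - i - 1 - xs ! k) [0..<length xs - Suc k]"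

lemma sc_facts:
  fixes xs :: "nat list"
  assumes k: "k < length xs" and inc: "sorted_wrt (<) (drop k xs)"
  shows "sorted (ysof xs k)"
    and "xs = rebuild (take (Suc k) xs) (ysof xs k)"
    and "sum_list xs = sum_list (take (Suc k) xs) + sum_list (ysof xs k) + G (length xs - Suc k) + (length xs - Suc k) * xs ! k"
proof -
  define c where "c = xs ! k"
  define L where "L = length xs - Suc k"
  define zs where "zs = drop k xs"
  have zsn: "zs ! j = xs ! (k + j)" if "j < length zs" for j using that k by (simp add: zs_def)
  have lz: "length zs = Suc L" using k by (simp add: zs_def L_def)
  have gap: "xs ! (Suc k + a) + (b - a) \<le> xs ! (Suc k + b)" if "a \<le> b" "b < L" for a b
  proof -
    have "zs ! Suc a + (Suc b - Suc a) \<le> zs ! Suc b"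
      by (rule sorted_lt_gap) (use inc that lz in \<open>auto simp: zs_def\<close>)
    then show ?thesis using zsn that lz by simp
  qed
  have F1: "c + i + 1 \<le> xs ! (Suc k + i)" if "i < L" for i
  proof -
    have "zs ! 0 + (Suc i - 0) \<le> zs ! Suc i"
      by (rule sorted_lt_gap) (use inc that lz in \<open>auto simp: zs_def\<close>)
    then show ?thesis using zsn[of 0] zsn[of "Suc i"] that lz by (simp add: c_def)
  qed
  have ysn: "ysof xs k ! i = xs ! (Suc k + i) - i - 1 - c" if "i < L" for i
    using that by (simp add: ysof_def L_def c_def)
  have ly: "length (ysof xs k) = L" by (simp add: ysof_def L_def)
  show "sorted (ysof xs k)"
    unfolding sorted_iff_nth_mono
  proof (intro allI impI)
    fix i j assume "i \<le> j" "j < length (ysof xs k)"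
    then show "ysof xs k ! i \<le> ysof xs k ! j"
      using gap[of i j] F1[of i] F1[of j] ysn[of i] ysn[of j] ly by simp
  qed
  have lastpre: "last (take (Suc k) xs) = c"
  proof -
    have ne: "take (Suc k) xs \<noteq> []" using k by (cases xs) auto
    have "length (take (Suc k) xs) = Suc k" using k by simp
    then show ?thesis using last_conv_nth[OF ne] k by (simp add: c_def)
  qed
  have bk: "ysof xs k ! i + i + 1 + c = xs ! (Suc k + i)" if "i < L" for i
    using ysn[OF that] F1[OF that] by simp
  have "drop (Suc k) xs = map (\<lambda>i. ysof xs k ! i + i + 1 + c) [0..<L]"
    by (rule nth_equalityI) (use bk in \<open>auto simp: L_def\<close>)
  then show "xs = rebuild (take (Suc k) xs) (ysof xs k)"
    unfolding rebuild_def lastpre ly by (metis append_take_drop_id)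
  have "sum_list (drop (Suc k) xs) = sum_list (map (\<lambda>i. ysof xs k ! i + i + 1 + c) [0..<L])"
    using \<open>drop (Suc k) xs = _\<close> by simp
  also have "\<dots> = (\<Sum>i<L. ysof xs k ! i + (i + 1) + c)"
    by (simp add: sum_list_sum_nth atLeast0LessThan add.assoc)
  also have "\<dots> = (\<Sum>i<L. ysof xs k ! i) + G L + L * c"
    by (simp only: sum.distrib G_def) simp
  also have "(\<Sum>i<L. ysof xs k ! i) = sum_list (ysof xs k)"
    by (simp add: sum_list_sum_nth ly atLeast0LessThan)
  finally have "sum_list (drop (Suc k) xs) = sum_list (ysof xs k) + G L + L * c" .
  moreover have "sum_list xs = sum_list (take (Suc k) xs) + sum_list (drop (Suc k) xs)"
    by (metis append_take_drop_id sum_list_append)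
  ultimately show "sum_list xs = sum_list (take (Suc k) xs) + sum_list (ysof xs k) + G (length xs - Suc k) + (length xs - Suc k) * xs ! k"
    by (simp add: L_def c_def)
qed


lemma last_take_Suc: "k < length xs \<Longrightarrow> last (take (Suc k) xs) = xs ! k"
proof -
  assume k: "k < length xs"
  have ne: "take (Suc k) xs \<noteq> []" using k by (cases xs) auto
  have "length (take (Suc k) xs) = Suc k" using k by simp
  then show ?thesis using last_conv_nth[OF ne] k by simp
qed

definition kx :: "int \<Rightarrow> nat list \<Rightarrow> nat" where
  "kx m xs = (SOME k. k < length xs \<and> sorted_wrt (>) (take (Suc k) xs) \<and> sorted_wrt (<) (drop k xs)
        \<and> m = int (length xs) - 2 * int k - 1)"

lemma kx_spec:
  assumes "sc_with_rank xs m"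
  shows "kx m xs < length xs \<and> sorted_wrt (>) (take (Suc (kx m xs)) xs) \<and> sorted_wrt (<) (drop (kx m xs) xs)
        \<and> m = int (length xs) - 2 * int (kx m xs) - 1"
  using assms unfolding sc_with_rank_def kx_def by (rule someI_ex)

definition Zs :: "nat \<Rightarrow> nat \<Rightarrow> nat multiset set" where
  "Zs r s = {M. size M = r \<and> sum_mset M = s}"

lemma upper_count:
  fixes l N n :: nat and Pre :: "nat list set" and \<sigma> :: "nat list \<Rightarrow> nat"
  assumes l1: "1 \<le> l"
  and n_def: "n = N + G l"
  and Pre_def: "Pre = {pre. pre \<noteq> [] \<and> length pre \<le> Suc n \<and> set pre \<subseteq> {0..n} \<and> l * (length pre - 1 + last pre) \<le> N}"
  and \<sigma>_def: "\<sigma> = (\<lambda>pre. n - sum_list pre - G (length pre - 1 + l) - (length pre - 1 + l) * last pre)"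
  shows "finite {xs. sum_list xs = n \<and> sc_with_rank xs (int l)}"
    and "Vd (int l) n \<le> (\<Sum>pre\<in>Pre. pc (\<sigma> pre))"
proof -
  define S where "S = {xs. sum_list xs = n \<and> sc_with_rank xs (int l)}"
  define f where "f = (\<lambda>xs. (take (Suc (kx (int l) xs)) xs, mset (ysof xs (kx (int l) xs))))"
  define T where "T = Sigma Pre (\<lambda>pre. Zs (length pre - 1 + l) (\<sigma> pre))"
  have finPre: "finite Pre"
  proof -
    have "Pre \<subseteq> {pre. set pre \<subseteq> {0..n} \<and> length pre \<le> Suc n}" unfolding Pre_def by auto
    moreover have "finite {pre. set pre \<subseteq> {0..n} \<and> length pre \<le> Suc n}"
      by (rule finite_lists_length_le) simp
    ultimately show ?thesis by (rule finite_subset)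
  qed
  have finT: "finite T" unfolding T_def
    by (rule finite_SigmaI[OF finPre]) (simp add: Zs_def finite_Z)
  have props: "kx (int l) xs < length xs \<and> sorted_wrt (<) (drop (kx (int l) xs) xs)
        \<and> length xs - Suc (kx (int l) xs) = kx (int l) xs + l" if "xs \<in> S" for xs
  proof -
    have "sc_with_rank xs (int l)" using that by (simp add: S_def)
    from kx_spec[OF this] show ?thesis by auto
  qed
  have injf: "inj_on f S"
  proof
    fix xs1 xs2 assume x1: "xs1 \<in> S" and x2: "xs2 \<in> S" and e: "f xs1 = f xs2"
    define k1 where "k1 = kx (int l) xs1"
    define k2 where "k2 = kx (int l) xs2"
    have p1: "take (Suc k1) xs1 = take (Suc k2) xs2" and m1: "mset (ysof xs1 k1) = mset (ysof xs2 k2)"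
      using e by (simp_all add: f_def k1_def k2_def)
    have s1: "sorted (ysof xs1 k1)" using sc_facts(1) props[OF x1] by (simp add: k1_def)
    have s2: "sorted (ysof xs2 k2)" using sc_facts(1) props[OF x2] by (simp add: k2_def)
    have "ysof xs1 k1 = sort (ysof xs2 k2)" using properties_for_sort[OF m1 s1] by simp
    also have "\<dots> = ysof xs2 k2" using s2 by (simp add: sorted_sort_id)
    finally have ye: "ysof xs1 k1 = ysof xs2 k2" .
    have "xs1 = rebuild (take (Suc k1) xs1) (ysof xs1 k1)" using sc_facts(2) props[OF x1] by (simp add: k1_def)
    also have "\<dots> = rebuild (take (Suc k2) xs2) (ysof xs2 k2)" using p1 ye by simp
    also have "\<dots> = xs2" using sc_facts(2) props[OF x2] by (simp add: k2_def)
    finally show "xs1 = xs2" .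
  qed
  have imgf: "f ` S \<subseteq> T"
  proof
    fix y assume "y \<in> f ` S"
    then obtain xs where x: "xs \<in> S" and y: "y = f xs" by auto
    define k where "k = kx (int l) xs"
    define c where "c = xs ! k"
    define pre where "pre = take (Suc k) xs"
    define ys where "ys = ysof xs k"
    have kl: "k < length xs" and inc: "sorted_wrt (<) (drop k xs)" and L: "length xs - Suc k = k + l"
      using props[OF x] by (simp_all add: k_def)
    have sumx: "sum_list xs = n" using x by (simp add: S_def)
    have eq: "n = sum_list pre + sum_list ys + G (k + l) + (k + l) * c"
      using sc_facts(3)[OF kl inc] sumx L by (simp add: pre_def ys_def c_def)
    have lp: "length pre = Suc k" using kl by (simp add: pre_def)
    have lastp: "last pre = c" using last_take_Suc[OF kl] by (simp add: pre_def c_def)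
    have ly: "length ys = k + l" using L by (simp add: ys_def ysof_def)
    have "k \<le> k + l" by simp
    also have "\<dots> \<le> G (k + l)" by (rule G_ge)
    also have "\<dots> \<le> n" using eq by linarith
    finally have kn: "k \<le> n" .
    have setp: "set pre \<subseteq> {0..n}"
    proof
      fix x assume "x \<in> set pre"
      then have "x \<in> set xs" by (simp add: pre_def) (meson in_set_takeD)
      then have "x \<le> n" using member_le_sum_list[of x xs] sumx by simp
      then show "x \<in> {0..n}" by simp
    qed
    have ga: "G l + k * l \<le> G (k + l)" by (rule G_add)
    have lc: "l * c \<le> (k + l) * c" by simp
    have w: "l * (k + c) \<le> N"
    proof -
      have "l * (k + c) = k * l + l * c" by (simp add: algebra_simps)
      then show ?thesis using eq n_def ga lc by linarith
    qed
    have "pre \<in> Pre" unfolding Pre_def using lp lastp kn setp w by (auto simp: pre_def)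
    moreover have "mset ys \<in> Zs (length pre - 1 + l) (\<sigma> pre)"
      unfolding Zs_def \<sigma>_def using ly lp lastp eq by (simp add: sum_mset_sum_list)
    ultimately show "y \<in> T" using y by (simp add: T_def f_def pre_def ys_def k_def)
  qed
  show "finite {xs. sum_list xs = n \<and> sc_with_rank xs (int l)}"
    using injf imgf finT unfolding S_def[symmetric]
    by (meson finite_imageD finite_subset)
  have "Vd (int l) n = card S" by (simp add: Vd_def S_def)
  also have "\<dots> \<le> card T" by (rule card_inj_on_le[OF injf imgf finT])
  also have "\<dots> = (\<Sum>pre\<in>Pre. card (Zs (length pre - 1 + l) (\<sigma> pre)))"
    unfolding T_def by (rule card_SigmaI[OF finPre]) (simp add: Zs_def finite_Z)
  also have "\<dots> \<le> (\<Sum>pre\<in>Pre. pc (\<sigma> pre))"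
    by (rule sum_mono) (simp add: Zs_def card_Z)
  finally show "Vd (int l) n \<le> (\<Sum>pre\<in>Pre. pc (\<sigma> pre))" .
qed


lemma sum_list_map_upt: "sum_list (map f [0..<l]) = (\<Sum>i<l. f i)"
  by (induction l) auto

lemma lower_count:
  fixes l N n :: nat
  assumes l1: "1 \<le> l" and n_def: "n = N + G l"
  shows "card {M\<in>PM N. size M \<le> l} \<le> Vd (int l) n"
proof -
  define S where "S = {xs. sum_list xs = n \<and> sc_with_rank xs (int l)}"
  have finS: "finite S" unfolding S_def by (rule upper_count(1)[OF l1 n_def refl refl])
  define ys where "ys = (\<lambda>M::nat multiset. replicate (l - size M) 0 @ sorted_list_of_multiset M)"
  define h where "h = (\<lambda>M. 0 # map (\<lambda>i. ys M ! i + i + 1) [0..<l])"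
  define dec where "dec = (\<lambda>xs::nat list. filter_mset (\<lambda>x. 0<x) (mset (map (\<lambda>i. xs ! (Suc i) - i - 1) [0..<l])))"
  have lys: "length (ys M) = l" if "size M \<le> l" for M
  proof -
    have "length (sorted_list_of_multiset M) = size (mset (sorted_list_of_multiset M))"
      by (rule size_mset[symmetric])
    then have "length (sorted_list_of_multiset M) = size M" by simp
    then show ?thesis using that by (simp add: ys_def)
  qed
  have sys: "sorted (ys M)" for M
    by (auto simp: ys_def sorted_append)
  have mys: "mset (ys M) = replicate_mset (l - size M) 0 + M" for M
    by (simp add: ys_def)
  have dech: "dec (h M) = M" if "M \<in> PM N" "size M \<le> l" for M
  proof -
    have e: "map (\<lambda>i. h M ! (Suc i) - i - 1) [0..<l] = ys M"
      by (rule nth_equalityI) (simp_all add: h_def lys[OF that(2)])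
    have "dec (h M) = filter_mset (\<lambda>x. 0<x) (mset (ys M))"
      by (simp only: dec_def e)
    also have "\<dots> = filter_mset (\<lambda>x. 0<x) (replicate_mset (l - size M) 0 + M)"
      by (simp only: mys)
    also have "\<dots> = filter_mset (\<lambda>x. 0<x) M" by simp
    also have "\<dots> = M"
    proof -
      have "\<forall>x\<in>#M. 0 < x" using that(1) by (auto simp: PM_def intro: gr0I)
      then show ?thesis by (simp add: filter_mset_eq_conv)
    qed
    finally show ?thesis .
  qed
  have injh: "inj_on h {M\<in>PM N. size M \<le> l}"
    by (rule inj_on_inverseI[where g=dec]) (use dech in auto)
  have imgh: "h ` {M\<in>PM N. size M \<le> l} \<subseteq> S"
  proof
    fix xs assume "xs \<in> h ` {M\<in>PM N. size M \<le> l}"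
    then obtain M where M: "M \<in> PM N" "size M \<le> l" and xs: "xs = h M" by auto
    have ly: "length (ys M) = l" by (rule lys[OF M(2)])
    have "sum_list (ys M) = N"
    proof -
      have "sum_list (ys M) = sum_mset (mset (ys M))" by (simp add: sum_mset_sum_list)
      also have "\<dots> = N" using M(1) by (simp add: mys PM_def)
      finally show ?thesis .
    qed
    have "sum_list xs = sum_list (map (\<lambda>i. ys M ! i + (i + 1)) [0..<l])"
      by (simp add: xs h_def add.assoc)
    also have "\<dots> = (\<Sum>i<l. ys M ! i + (i + 1))" by (rule sum_list_map_upt)
    also have "\<dots> = (\<Sum>i<l. ys M ! i) + G l" by (simp only: sum.distrib G_def)
    also have "(\<Sum>i<l. ys M ! i) = sum_list (ys M)" by (simp add: sum_list_sum_nth ly atLeast0LessThan)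
    finally have sx: "sum_list xs = n" using \<open>sum_list (ys M) = N\<close> n_def by simp
    have mono: "sorted_wrt (\<lambda>i j. ys M ! i + i + 1 < ys M ! j + j + 1) [0..<l]"
    proof (rule sorted_wrt_mono_rel[OF _ sorted_wrt_upt])
      fix i j assume "i \<in> set [0..<l]" "j \<in> set [0..<l]" "i < j"
      then have "ys M ! i \<le> ys M ! j" using sys[of M] ly by (simp add: sorted_iff_nth_mono)
      then show "ys M ! i + i + 1 < ys M ! j + j + 1" using \<open>i < j\<close> by simp
    qed
    have "sorted_wrt (<) xs"
      unfolding xs h_def using mono by (simp add: sorted_wrt_map)
    then have "sc_with_rank xs (int l)"
      unfolding sc_with_rank_def by (rule_tac x=0 in exI) (simp add: xs h_def)
    then show "xs \<in> S" using sx by (simp add: S_def)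
  qed
  have "card {M\<in>PM N. size M \<le> l} \<le> card S" by (rule card_inj_on_le[OF injh imgh finS])
  then show ?thesis by (simp add: Vd_def S_def)
qed


lemma pre_sum_bound:
  fixes n :: nat and \<rho> :: real
  assumes rp: "0 \<le> \<rho>" and sm: "(real n + 1) * \<rho> \<le> 1"
  shows "(\<Sum>pre\<in>{pre. set pre \<subseteq> {0..n} \<and> length pre \<in> {1..Suc n}}. \<rho>^(max (length pre - 1) 1))
     \<le> (real n + 1)^3 * \<rho>"
proof -
  define Lj where "Lj = (\<lambda>j. {pre. set pre \<subseteq> {0..n} \<and> length pre = j})"
  have A: "{pre. set pre \<subseteq> {0..n} \<and> length pre \<in> {1..Suc n}} = (\<Union>j\<in>{1..Suc n}. Lj j)"
    by (auto simp: Lj_def)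
  have finL: "finite (Lj j)" for j unfolding Lj_def by (rule finite_lists_length_eq) simp
  have cardL: "card (Lj j) = Suc n ^ j" for j unfolding Lj_def
    using card_lists_length_eq[of "{0..n}" j] by simp
  define q where "q = (real n + 1) * \<rho>"
  have q0: "0 \<le> q" "q \<le> 1" using rp sm by (simp_all add: q_def)
  have tb: "real (Suc n ^ j) * \<rho>^(max (j - 1) 1) \<le> (real n + 1) * q" if "j \<in> {1..Suc n}" for j
  proof (cases "j = 1")
    case True
    have "q \<le> (real n + 1) * q" using q0 by (simp add: mult_le_cancel_right1)
    moreover have "real (Suc n ^ j) * \<rho>^(max (j - 1) 1) = q" using True by (simp add: q_def add.commute)
    ultimately show ?thesis by simp
  next
    case False
    have "2 \<le> j" using False that by auto
    define i where "i = j - 2"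
    have j: "j = Suc (Suc i)" using \<open>2 \<le> j\<close> by (simp add: i_def)
    have m: "max (j - 1) 1 = Suc i" by (simp add: j)
    have r0: "real (Suc n ^ j) = (real n + 1)^j" by (simp add: add.commute)
    have r1: "(real n + 1)^j = (real n + 1) * (real n + 1)^Suc i" by (simp only: j power_Suc)
    have r: "real (Suc n ^ j) = (real n + 1) * (real n + 1)^Suc i" using r0 r1 by (rule trans)
    have "real (Suc n ^ j) * \<rho>^(max (j - 1) 1) = (real n + 1) * ((real n + 1)^Suc i * \<rho> ^ Suc i)"
      unfolding m r by (simp only: mult.assoc)
    also have "\<dots> = (real n + 1) * q ^ Suc i" by (simp only: q_def power_mult_distrib)
    finally have "real (Suc n ^ j) * \<rho>^(max (j - 1) 1) = (real n + 1) * q ^ Suc i" .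
    also have "\<dots> \<le> (real n + 1) * q"
    proof (rule mult_left_mono)
      show "q ^ Suc i \<le> q" using power_decreasing[of 1 "Suc i" q] q0 by simp
    qed simp
    finally show ?thesis .
  qed
  have "(\<Sum>pre\<in>{pre. set pre \<subseteq> {0..n} \<and> length pre \<in> {1..Suc n}}. \<rho>^(max (length pre - 1) 1))
      = (\<Sum>j\<in>{1..Suc n}. (\<Sum>pre\<in>Lj j. \<rho>^(max (length pre - 1) 1)))"
    unfolding A by (rule sum.UNION_disjoint) (simp, simp add: finL, auto simp: Lj_def)
  also have "\<dots> = (\<Sum>j\<in>{1..Suc n}. real (Suc n ^ j) * \<rho>^(max (j - 1) 1))"
  proof (rule sum.cong[OF refl])
    fix j assume "j \<in> {1..Suc n}"
    have "(\<Sum>pre\<in>Lj j. \<rho>^(max (length pre - 1) 1)) = (\<Sum>pre\<in>Lj j. \<rho>^(max (j - 1) 1))"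
      by (rule sum.cong) (auto simp: Lj_def)
    then show "(\<Sum>pre\<in>Lj j. \<rho>^(max (length pre - 1) 1)) = real (Suc n ^ j) * \<rho>^(max (j - 1) 1)"
      by (simp add: cardL)
  qed
  also have "\<dots> \<le> (\<Sum>j\<in>{1..Suc n}. (real n + 1) * q)" by (rule sum_mono) (rule tb)
  also have "\<dots> = (real n + 1)^3 * \<rho>" by (simp add: q_def power3_eq_cube)
  finally show ?thesis .
qed

lemma card_split: "finite A \<Longrightarrow> card {x\<in>A. P x} + card {x\<in>A. \<not> P x} = card A"
proof -
  assume f: "finite A"
  have "card ({x\<in>A. P x} \<union> {x\<in>A. \<not> P x}) = card {x\<in>A. P x} + card {x\<in>A. \<not> P x}"
    by (rule card_Un_disjoint) (use f in auto)
  moreover have "{x\<in>A. P x} \<union> {x\<in>A. \<not> P x} = A" by auto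
  ultimately show ?thesis by simp
qed


lemma main_comb:
  fixes l N :: nat and \<rho> :: real
  assumes l1: "1 \<le> l" and lN: "l \<le> N"
    and st: "\<forall>m. l \<le> m \<and> m \<le> N \<longrightarrow> real (pc (m - l)) \<le> \<rho> * real (pc m)"
    and rp: "0 \<le> \<rho>" and small: "(real (N + G l) + 1) * \<rho> \<le> 1"
  shows "\<bar>real (Vd (int l) (N + G l)) - real (pc N)\<bar> \<le> ((real (N + G l) + 1)^3 + real N) * \<rho> * real (pc N)"
proof -
  define n where "n = N + G l"
  define Pre where "Pre = {pre. pre \<noteq> [] \<and> length pre \<le> Suc n \<and> set pre \<subseteq> {0..n} \<and> l * (length pre - 1 + last pre) \<le> N}"
  define \<sigma> where "\<sigma> = (\<lambda>pre. n - sum_list pre - G (length pre - 1 + l) - (length pre - 1 + l) * last pre)"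
  define A where "A = {pre. set pre \<subseteq> {0..n} \<and> length pre \<in> {1..Suc n}}"
  have r1: "\<rho> \<le> 1"
  proof -
    have "\<rho> \<le> (real n + 1) * \<rho>" using rp by (simp add: mult_le_cancel_right1)
    then show ?thesis using small by (simp add: n_def)
  qed
  have finPre: "finite Pre"
  proof -
    have "Pre \<subseteq> {pre. set pre \<subseteq> {0..n} \<and> length pre \<le> Suc n}" unfolding Pre_def by auto
    moreover have "finite {pre. set pre \<subseteq> {0..n} \<and> length pre \<le> Suc n}"
      by (rule finite_lists_length_le) simp
    ultimately show ?thesis by (rule finite_subset)
  qed
  have finA: "finite A"
  proof -
    have "A \<subseteq> {pre. set pre \<subseteq> {0..n} \<and> length pre \<le> Suc n}" unfolding A_def by auto
    moreover have "finite {pre. set pre \<subseteq> {0..n} \<and> length pre \<le> Suc n}"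
      by (rule finite_lists_length_le) simp
    ultimately show ?thesis by (rule finite_subset)
  qed
  have up: "Vd (int l) n \<le> (\<Sum>pre\<in>Pre. pc (\<sigma> pre))"
    by (rule upper_count(2)[OF l1 n_def Pre_def \<sigma>_def])
  have z: "[0] \<in> Pre" unfolding Pre_def by simp
  have sz: "\<sigma> [0] = N" by (simp add: \<sigma>_def n_def)
  have each: "real (pc (\<sigma> pre)) \<le> \<rho>^(max (length pre - 1) 1) * real (pc N)" if "pre \<in> Pre - {[0]}" for pre
  proof -
    define k where "k = length pre - 1"
    define c where "c = last pre"
    have ne: "pre \<noteq> []" and lw: "l * (k + c) \<le> N" using that by (auto simp: Pre_def k_def c_def)
    have ga: "G l + k * l \<le> G (k + l)" by (rule G_add)
    have lc: "l * c \<le> (k + l) * c" by simp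
    have "\<sigma> pre \<le> N - (k + c) * l"
    proof -
      have "\<sigma> pre = n - sum_list pre - G (k + l) - (k + l) * c" by (simp add: \<sigma>_def k_def c_def)
      moreover have "(k + c) * l = k * l + l * c" by (simp add: algebra_simps)
      ultimately show ?thesis using ga lc n_def by linarith
    qed
    then have "pc (\<sigma> pre) \<le> pc (N - (k + c) * l)" by (rule pc_mono)
    also have "real (pc (N - (k + c) * l)) \<le> \<rho>^(k + c) * real (pc N)"
      by (rule iter_bound[OF st rp]) (use lw in \<open>simp add: mult.commute\<close>)
    finally have a: "real (pc (\<sigma> pre)) \<le> \<rho>^(k + c) * real (pc N)" by simp
    have "max k 1 \<le> k + c"
    proof (cases "k = 0")
      case True
      then have "pre = [c]" using ne by (cases pre) (auto simp: k_def c_def)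
      then have "c \<noteq> 0" using that by auto
      then show ?thesis using True by simp
    next
      case False then show ?thesis by simp
    qed
    then have "\<rho>^(k + c) \<le> \<rho>^(max k 1)" by (rule power_decreasing) (use rp r1 in auto)
    then have "\<rho>^(k + c) * real (pc N) \<le> \<rho>^(max k 1) * real (pc N)" by (rule mult_right_mono) simp
    with a show ?thesis by (simp add: k_def)
  qed
  have sub: "Pre - {[0]} \<subseteq> A" unfolding Pre_def A_def by (auto simp: Suc_le_eq intro: gr0I)
  have "real (Vd (int l) n) \<le> real (pc (\<sigma> [0])) + (\<Sum>pre\<in>Pre - {[0]}. real (pc (\<sigma> pre)))"
  proof -
    have "real (Vd (int l) n) \<le> (\<Sum>pre\<in>Pre. real (pc (\<sigma> pre)))" using up by (simp flip: of_nat_sum)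
    also have "\<dots> = real (pc (\<sigma> [0])) + (\<Sum>pre\<in>Pre - {[0]}. real (pc (\<sigma> pre)))"
      using finPre z by (rule sum.remove)
    finally show ?thesis .
  qed
  also have "(\<Sum>pre\<in>Pre - {[0]}. real (pc (\<sigma> pre))) \<le> (\<Sum>pre\<in>Pre - {[0]}. \<rho>^(max (length pre - 1) 1) * real (pc N))"
    by (rule sum_mono) (rule each)
  also have "\<dots> \<le> (\<Sum>pre\<in>A. \<rho>^(max (length pre - 1) 1) * real (pc N))"
    by (rule sum_mono2[OF finA sub]) (use rp in simp)
  also have "\<dots> = (\<Sum>pre\<in>A. \<rho>^(max (length pre - 1) 1)) * real (pc N)"
    by (simp add: sum_distrib_right)
  also have "\<dots> \<le> ((real n + 1)^3 * \<rho>) * real (pc N)"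
    by (rule mult_right_mono) (use pre_sum_bound[OF rp, of n] small in \<open>simp_all add: A_def n_def\<close>)
  finally have upper: "real (Vd (int l) n) \<le> real (pc N) + (real n + 1)^3 * \<rho> * real (pc N)"
    using sz by simp
  have "card {M\<in>PM N. size M \<le> l} + card {M\<in>PM N. \<not> size M \<le> l} = card (PM N)"
    by (rule card_split[OF PM_finite])
  moreover have "card {M\<in>PM N. \<not> size M \<le> l} \<le> N * pc (N - l)"
    using many_parts[of N l] by (simp add: not_le)
  moreover have "card {M\<in>PM N. size M \<le> l} \<le> Vd (int l) n" by (rule lower_count[OF l1 n_def])
  ultimately have "real (pc N) \<le> real (Vd (int l) n) + real N * real (pc (N - l))"
    by (simp add: pc_PM flip: of_nat_mult)
  moreover have "real (pc (N - l)) \<le> \<rho> * real (pc N)" using st lN l1 by auto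
  ultimately have lower: "real (pc N) \<le> real (Vd (int l) n) + real N * \<rho> * real (pc N)"
    by (smt (verit, best) mult_left_mono of_nat_0_le_iff mult.assoc)
  have p0: "0 \<le> (real n + 1)^3 * \<rho> * real (pc N)" "0 \<le> real N * \<rho> * real (pc N)" using rp by simp_all
  show ?thesis using upper lower p0 unfolding n_def[symmetric] by (simp add: abs_le_iff algebra_simps)
qed


lemma ev_all: "\<forall>\<^sub>F x in at_top. (2::real) \<le> (ln x)^2/8 \<and> (ln x)^2/8 + 2 < 8*sqrt x
   \<and> ((x+1)^6 + x) * 6 * sqrt x * 2 powr (- ((ln x)^2) / 8) * x powr sqrt (ln x) < 1 \<and> 1 \<le> x"
proof -
  have 1: "\<forall>\<^sub>F x in at_top. (2::real) \<le> (ln x)^2/8" by real_asymp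
  have 2: "\<forall>\<^sub>F x in at_top. (ln x)^2/8 + 2 < 8*sqrt (x::real)" by real_asymp
  have 3: "\<forall>\<^sub>F x in at_top. ((x+1)^6 + x) * 6 * sqrt x * 2 powr (- ((ln x)^2) / 8) * x powr sqrt (ln x) < (1::real)"
    by real_asymp
  have 4: "\<forall>\<^sub>F x in at_top. 1 \<le> (x::real)" by real_asymp
  show ?thesis using 1 2 3 4 by eventually_elim auto
qed


lemma final_nat:
  fixes N L0 :: nat
  defines "x \<equiv> real N"
  assumes h1: "2 \<le> (ln x)^2/8" and h2: "(ln x)^2/8 + 2 < 8*sqrt x"
    and h3: "((x+1)^6 + x) * 6 * sqrt x * 2 powr (- ((ln x)^2) / 8) * x powr sqrt (ln x) < 1"
    and h4: "1 \<le> x"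
    and hl1: "sqrt x * (ln x)^2 < real L0" and hl2: "real L0 \<le> x / 2"
  shows "\<bar>real (Vd (int L0) (N + G L0)) - real (pc N)\<bar> \<le> 1 * real (pc N) * x powr (- sqrt (ln x))"
proof -
  define y where "y = (ln x)^2/8"
  define R where "R = nat \<lfloor>y\<rfloor>"
  define D where "D = nat \<lfloor>sqrt (2*x)\<rfloor>"
  define Mv where "Mv = (L0 - 1) div R"
  have y0: "0 \<le> y" by (simp add: y_def)
  have Ry: "real R \<le> y" using y0 by (simp add: R_def)
  have Ry1: "y - 1 \<le> real R" using y0 by (simp add: R_def)
  have R2: "2 \<le> R" using h1 by (simp add: R_def y_def le_nat_iff le_floor_iff)
  have sx1: "1 \<le> sqrt x" using h4 by simp
  have L1: "1 \<le> L0"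
  proof -
    have "0 \<le> sqrt x * (ln x)^2" using h4 by simp
    then show ?thesis using hl1 by simp
  qed
  have LN: "L0 \<le> N" using hl2 h4 by (simp add: x_def)
  have sqrt2: "sqrt (2*x) \<le> 3/2 * sqrt x"
  proof -
    have "sqrt 2 \<le> 3/2" by (rule real_le_lsqrt) (simp_all add: power2_eq_square)
    then show ?thesis using sx1 by (simp add: real_sqrt_mult)
  qed
  have D0: "real D \<le> sqrt (2*x)" using h4 by (simp add: D_def)
  have Mv_lb: "8 * sqrt x - 2 < real Mv"
  proof -
    have "L0 - 1 < R * Suc Mv"
    proof -
      have "L0 - 1 = R * Mv + (L0 - 1) mod R" by (simp add: Mv_def)
      moreover have "(L0 - 1) mod R < R" using R2 by simp
      ultimately show ?thesis by simp
    qed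
    then have a: "real L0 - 1 < real R * (real Mv + 1)" using L1
      by (metis (mono_tags, opaque_lifting) of_nat_1 of_nat_Suc of_nat_diff of_nat_less_iff of_nat_mult add.commute)
    have "8 * sqrt x * real R \<le> sqrt x * (ln x)^2" using Ry sx1 by (simp add: y_def)
    then have "8 * sqrt x * real R - 1 < real R * (real Mv + 1)" using a hl1 by linarith
    then have "8 * sqrt x * real R - real R < real R * (real Mv + 1)" using R2 by linarith
    then have "real R * (8 * sqrt x - 1) < real R * (real Mv + 1)" by (simp add: algebra_simps)
    then have "8 * sqrt x - 1 < real Mv + 1" using R2 by (simp add: mult_less_cancel_left)
    then show ?thesis by simp
  qed
  have DM: "2 * D \<le> Mv"
  proof -
    have "2 * real D < real Mv" using D0 sqrt2 Mv_lb sx1 by linarith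
    then have "real (2 * D) < real Mv" by simp
    then show ?thesis by simp
  qed
  have RMv: "R - 1 \<le> Mv"
  proof -
    have "real R < real Mv" using Ry h2 Mv_lb by (simp add: y_def)
    then show ?thesis by simp
  qed
  have RM: "R * Mv + 1 \<le> L0"
  proof -
    have "R * Mv \<le> L0 - 1" unfolding Mv_def by (simp add: mult.commute div_times_less_eq_dividend)
    then show ?thesis using L1 by simp
  qed
  have Dbd: "\<forall>m\<le>N. \<forall>\<pi>\<in>PM m. card (set_mset \<pi>) \<le> D"
  proof (intro allI impI ballI)
    fix m \<pi> assume m: "m \<le> N" and p: "\<pi> \<in> PM m"
    define d where "d = card (set_mset \<pi>)"
    have "d * (d + 1) \<le> 2 * N" using distinct_parts_bound[OF p] m by (simp add: d_def)
    then have "d * d \<le> 2 * N" by (meson le_trans mult_le_mono2 le_add1)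
    then have "(real d)^2 \<le> 2 * x" unfolding x_def power2_eq_square
      by (metis of_nat_le_iff of_nat_mult of_nat_numeral)
    then have "real d \<le> sqrt (2 * x)" by (rule real_le_rsqrt)
    then have "int d \<le> \<lfloor>sqrt (2*x)\<rfloor>" by (simp add: le_floor_iff)
    then show "card (set_mset \<pi>) \<le> D" by (simp add: D_def d_def)
  qed
  define \<rho> where "\<rho> = real D / 2^(R-1)"
  have st: "\<forall>m. L0 \<le> m \<and> m \<le> N \<longrightarrow> real (pc (m - L0)) \<le> \<rho> * real (pc m)"
    unfolding \<rho>_def by (rule step_bound) (use R2 RM DM RMv Dbd in auto)
  have rp: "0 \<le> \<rho>" by (simp add: \<rho>_def)
  have rho_bd: "\<rho> \<le> 6 * sqrt x * 2 powr (- y)"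
  proof -
    have p: "(2::real)^(R-1) = 2 powr real (R - 1)" by (simp add: powr_realpow)
    have "y - 2 \<le> real (R - 1)" using Ry1 R2 by (simp add: of_nat_diff)
    then have "2 powr (y - 2) \<le> 2 powr real (R - 1)" by (rule powr_mono) simp
    moreover have "2 powr (y - 2) = 2 powr y / 4" by (simp add: powr_diff)
    ultimately have b: "2 powr y / 4 \<le> 2^(R-1)" using p by simp
    have pos: "0 < 2 powr y / 4" by simp
    have "real D \<le> 3/2 * sqrt x" using D0 sqrt2 by linarith
    then have "\<rho> \<le> (3/2 * sqrt x) / 2^(R-1)" unfolding \<rho>_def by (rule divide_right_mono) simp
    also have "\<dots> \<le> (3/2 * sqrt x) / (2 powr y / 4)"
      by (rule divide_left_mono[OF b]) (use sx1 pos in simp_all)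
    also have "\<dots> = 6 * sqrt x * 2 powr (- y)" by (simp add: powr_minus field_simps)
    finally show ?thesis .
  qed
  define n where "n = N + G L0"
  have Gb: "G L0 \<le> N * N"
  proof -
    have "G L0 = L0 * (L0 + 1) div 2" by (rule G_closed)
    also have "\<dots> \<le> (2 * (L0 * L0)) div 2"
    proof (rule div_le_mono)
      have "L0 \<le> L0 * L0" using L1 by simp
      then show "L0 * (L0 + 1) \<le> 2 * (L0 * L0)" by (simp add: algebra_simps)
    qed
    also have "\<dots> = L0 * L0" by simp
    also have "\<dots> \<le> N * N" using LN by (simp add: mult_le_mono)
    finally show ?thesis .
  qed
  have n1: "real n + 1 \<le> (x + 1)^2"
  proof -
    have "real (G L0) \<le> x * x" using Gb unfolding x_def by (metis of_nat_le_iff of_nat_mult)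
    then show ?thesis by (simp add: n_def x_def power2_eq_square algebra_simps)
  qed
  have E: "(real n + 1)^3 + x \<le> (x + 1)^6 + x"
  proof -
    have "(real n + 1)^3 \<le> ((x+1)^2)^3" by (rule power_mono[OF n1]) simp
    then show ?thesis by (simp add: power_mult[symmetric])
  qed
  define s where "s = sqrt (ln x)"
  have xs: "0 < x powr s" using h4 by simp
  have Fb: "((x+1)^6 + x) * 6 * sqrt x * 2 powr (- y) \<le> x powr (- s)"
  proof -
    have "((x+1)^6 + x) * 6 * sqrt x * 2 powr (- y) * x powr s < 1" using h3 by (simp add: y_def s_def)
    then have "((x+1)^6 + x) * 6 * sqrt x * 2 powr (- y) < 1 / x powr s" using xs by (simp add: field_simps)
    then show ?thesis by (simp add: powr_minus_divide)
  qed
  have Erho: "((real n + 1)^3 + x) * \<rho> \<le> x powr (- s)"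
  proof -
    have "((real n + 1)^3 + x) * \<rho> \<le> ((x + 1)^6 + x) * \<rho>" using E rp by (rule mult_right_mono)
    also have "\<dots> \<le> ((x + 1)^6 + x) * (6 * sqrt x * 2 powr (- y))"
      using rho_bd h4 by (intro mult_left_mono) simp_all
    also have "\<dots> = ((x+1)^6 + x) * 6 * sqrt x * 2 powr (- y)" by (simp only: mult.assoc)
    also have "\<dots> \<le> x powr (- s)" by (rule Fb)
    finally show ?thesis .
  qed
  have xs1: "x powr (- s) \<le> 1"
  proof -
    have "x powr (- s) \<le> x powr 0" by (rule powr_mono) (use h4 in \<open>simp_all add: s_def\<close>)
    then show ?thesis using h4 by simp
  qed
  have small: "(real (N + G L0) + 1) * \<rho> \<le> 1"
  proof -
    have "real n + 1 \<le> (real n + 1)^3 + x"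
    proof -
      have "real n + 1 \<le> (real n + 1)^3" by (rule self_le_power[where n=3, simplified]) simp
      then show ?thesis using h4 by simp
    qed
    then have "(real n + 1) * \<rho> \<le> ((real n + 1)^3 + x) * \<rho>" using rp by (rule mult_right_mono)
    then show ?thesis using Erho xs1 by (simp add: n_def)
  qed
  have mc: "\<bar>real (Vd (int L0) (N + G L0)) - real (pc N)\<bar> \<le> ((real (N + G L0) + 1)^3 + real N) * \<rho> * real (pc N)"
    by (rule main_comb[OF L1 LN st rp small])
  also have "\<dots> \<le> x powr (- s) * real (pc N)"
    using Erho by (intro mult_right_mono) (simp_all add: n_def x_def)
  finally show ?thesis by (simp add: s_def mult.commute)
qed


lemma sc_rev:
  assumes "sc_with_rank xs m"
  shows "sc_with_rank (rev xs) (-m)"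
proof -
  from assms obtain k where k: "k < length xs" and dec: "sorted_wrt (>) (take (Suc k) xs)"
    and inc: "sorted_wrt (<) (drop k xs)" and m: "m = int (length xs) - 2 * int k - 1"
    unfolding sc_with_rank_def by blast
  define k' where "k' = length xs - 1 - k"
  have "take (Suc k') (rev xs) = rev (drop k xs)"
    using k by (simp add: rev_drop k'_def Suc_diff_Suc)
  then have d': "sorted_wrt (>) (take (Suc k') (rev xs))" using inc by (simp add: sorted_wrt_rev)
  have "drop k' (rev xs) = rev (take (Suc k) xs)"
    using k by (simp add: rev_take k'_def)
  then have i': "sorted_wrt (<) (drop k' (rev xs))" using dec by (simp add: sorted_wrt_rev)
  have "k' < length (rev xs)" using k by (simp add: k'_def)
  moreover have "- m = int (length (rev xs)) - 2 * int k' - 1" using k m by (simp add: k'_def of_nat_diff)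
  ultimately show ?thesis unfolding sc_with_rank_def using d' i' by blast
qed

lemma Vd_neg: "Vd (-m) n = Vd m n"
proof -
  have "{xs. sum_list xs = n \<and> sc_with_rank xs (-m)} = rev ` {xs. sum_list xs = n \<and> sc_with_rank xs m}"
  proof
    show "{xs. sum_list xs = n \<and> sc_with_rank xs (-m)} \<subseteq> rev ` {xs. sum_list xs = n \<and> sc_with_rank xs m}"
    proof
      fix xs assume "xs \<in> {xs. sum_list xs = n \<and> sc_with_rank xs (-m)}"
      then have "rev xs \<in> {xs. sum_list xs = n \<and> sc_with_rank xs m}"
        using sc_rev[of xs "-m"] by (simp add: sum_list_rev)
      then show "xs \<in> rev ` {xs. sum_list xs = n \<and> sc_with_rank xs m}"
        by (rule image_eqI[rotated]) simp
    qed
    show "rev ` {xs. sum_list xs = n \<and> sc_with_rank xs m} \<subseteq> {xs. sum_list xs = n \<and> sc_with_rank xs (-m)}"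
      using sc_rev by (auto simp: sum_list_rev)
  qed
  then show ?thesis unfolding Vd_def by (simp add: card_image)
qed

theorem mainTheorem6:
  shows "\<exists>C::real. \<exists>N0::nat. \<forall>N::nat. \<forall>l::int.
    N \<ge> N0 \<and> sqrt (real N) * (ln (real N))^2 < real_of_int \<bar>l\<bar> \<and> real_of_int \<bar>l\<bar> \<le> real N / 2 \<longrightarrow>
    \<bar>real (Vd l (N + nat (\<bar>l\<bar> * (\<bar>l\<bar> + 1) div 2))) - real (partition_count N)\<bar>
      \<le> C * real (partition_count N) * real N powr (- sqrt (ln (real N)))"
proof -
  obtain X where X: "\<And>x. x \<ge> X \<Longrightarrow> (2::real) \<le> (ln x)^2/8 \<and> (ln x)^2/8 + 2 < 8*sqrt x
   \<and> ((x+1)^6 + x) * 6 * sqrt x * 2 powr (- ((ln x)^2) / 8) * x powr sqrt (ln x) < 1 \<and> 1 \<le> x"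
    using ev_all unfolding eventually_at_top_linorder by blast
  show ?thesis
  proof (intro exI allI impI)
    fix N :: nat and l :: int
    assume a: "nat \<lceil>X\<rceil> \<le> N \<and> sqrt (real N) * (ln (real N))^2 < real_of_int \<bar>l\<bar> \<and> real_of_int \<bar>l\<bar> \<le> real N / 2"
    define L0 where "L0 = nat \<bar>l\<bar>"
    have L0r: "real L0 = real_of_int \<bar>l\<bar>" by (simp add: L0_def)
    have "X \<le> real N"
    proof -
      have "X \<le> real (nat \<lceil>X\<rceil>)" by linarith
      also have "\<dots> \<le> real N" using a by simp
      finally show ?thesis .
    qed
    then have h: "(2::real) \<le> (ln (real N))^2/8 \<and> (ln (real N))^2/8 + 2 < 8*sqrt (real N)
      \<and> ((real N+1)^6 + real N) * 6 * sqrt (real N) * 2 powr (- ((ln (real N))^2) / 8) * real N powr sqrt (ln (real N)) < 1 \<and> 1 \<le> real N"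
      by (rule X)
    have fin: "\<bar>real (Vd (int L0) (N + G L0)) - real (pc N)\<bar> \<le> 1 * real (pc N) * real N powr (- sqrt (ln (real N)))"
    proof (rule final_nat)
      show "2 \<le> (ln (real N))^2/8" using h by simp
      show "(ln (real N))^2/8 + 2 < 8*sqrt (real N)" using h by simp
      show "((real N+1)^6 + real N) * 6 * sqrt (real N) * 2 powr (- ((ln (real N))^2) / 8) * real N powr sqrt (ln (real N)) < 1"
        using h by simp
      show "1 \<le> real N" using h by simp
      show "sqrt (real N) * (ln (real N))^2 < real L0" using a L0r by simp
      show "real L0 \<le> real N / 2" using a L0r by simp
    qed
    have gg: "nat (\<bar>l\<bar> * (\<bar>l\<bar> + 1) div 2) = G L0"
    proof -
      have "\<bar>l\<bar> = int L0" by (simp add: L0_def)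
      then have "\<bar>l\<bar> * (\<bar>l\<bar> + 1) div 2 = int (L0 * (L0 + 1)) div int 2"
        by (simp only: of_nat_mult of_nat_add of_nat_1 of_nat_numeral)
      also have "\<dots> = int (L0 * (L0 + 1) div 2)" by (rule zdiv_int[symmetric])
      finally have "\<bar>l\<bar> * (\<bar>l\<bar> + 1) div 2 = int (L0 * (L0 + 1) div 2)" .
      then show ?thesis by (simp add: G_closed)
    qed
    have vv: "Vd l (N + nat (\<bar>l\<bar> * (\<bar>l\<bar> + 1) div 2)) = Vd (int L0) (N + G L0)"
    proof (cases "0 \<le> l")
      case True
      then have "l = int L0" by (simp add: L0_def)
      then show ?thesis using gg by simp
    next
      case False
      then have "l = - int L0" by (simp add: L0_def)
      then show ?thesis using gg Vd_neg by simp
    qed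
    show "\<bar>real (Vd l (N + nat (\<bar>l\<bar> * (\<bar>l\<bar> + 1) div 2))) - real (partition_count N)\<bar>
      \<le> 1 * real (partition_count N) * real N powr (- sqrt (ln (real N)))"
      using fin vv by simp
  qed
qed

end
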